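(* Let $n\ge 2$ and let $\ell_1,\ell_2,\ell_3\subset\mathbb R^n$ be lines through the origin. The following are equivalent: (1) $\dim(\ell_1+\ell_2+\ell_3)=2$; (2) for every triple of points $z_1,z_2,z_3\in\mathbb R^n$ there exists a rigid motion $g$ of $\mathbb R^n$ with $g(z_j)\in\ell_j$ for each $j=1,2,3$.
   Context: A rigid motion of $\mathbb R^n$ is a map $x\mapsto Rx+T$ with $R\in\mathrm{SO}(n)$ and $T\in\mathbb R^n$. *)

theory Defs
  imports "HOL-Analysis.Analysis"
begin

definition line_through_origin :: "(real^'n) set \<Rightarrow> bool" where
  "line_through_origin L \<longleftrightarrow> (\<exists>v. v \<noteq> 0 \<and> L = span {v})"

definition rigid_motion :: "(real^'n \<Rightarrow> real^'n) \<Rightarrow> bool" where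
  "rigid_motion g \<longleftrightarrow>
     (\<exists>(R::real^'n^'n) T. orthogonal_matrix R \<and> det R = 1 \<and> (\<forall>x. g x = R *v x + T))"

end

theory Submission
  imports Defs
begin

definition hrefl :: "real^'n \<Rightarrow> real^'n \<Rightarrow> real^'n" where
  "hrefl u x = x - (2 * (x \<bullet> u)) *\<^sub>R u"

lemma linear_hrefl: "linear (hrefl u)"
  unfolding hrefl_def
  by (intro linearI) (auto simp: inner_add_left algebra_simps)

lemma orth_hrefl:
  assumes "norm u = 1" shows "orthogonal_transformation (hrefl u)"
proof -
  have "u \<bullet> u = 1" using assms by (simp add: dot_square_norm)
  then show ?thesis
    unfolding orthogonal_transformation_def
    by (auto simp: linear_hrefl hrefl_def inner_diff_left inner_diff_right inner_commute algebra_simps)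
qed

lemma matrix_hrefl_axis:
  "matrix (hrefl (axis k (1::real)) :: real^'n\<Rightarrow>real^'n) $ i $ j =
     (if i = j then (if i = k then -1 else 1) else 0)"
  by (simp add: matrix_def hrefl_def inner_axis_axis, auto simp add: axis_def)

lemma det_hrefl_axis: "det (matrix (hrefl (axis k (1::real)) :: real^'n\<Rightarrow>real^'n)) = -1"
proof -
  have "det (matrix (hrefl (axis k (1::real)) :: real^'n\<Rightarrow>real^'n)) =
        (\<Prod>i\<in>UNIV. (matrix (hrefl (axis k (1::real)) :: real^'n\<Rightarrow>real^'n)) $ i $ i)"
    by (rule det_diagonal) (simp add: matrix_hrefl_axis)
  also have "\<dots> = (\<Prod>i\<in>UNIV. if i = k then -1 else 1)"
    by (intro prod.cong) (auto simp: matrix_hrefl_axis)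
  also have "\<dots> = -1"
    by (simp add: prod.If_cases)
  finally show ?thesis .
qed

lemma hrefl_conj:
  assumes "orthogonal_transformation Q"
  shows "hrefl (Q u) \<circ> Q = Q \<circ> hrefl u"
proof
  fix x
  have l: "linear Q" using assms orthogonal_transformation by blast
  have "Q x \<bullet> Q u = x \<bullet> u" using assms orthogonal_transformation_def by blast
  then show "(hrefl (Q u) \<circ> Q) x = (Q \<circ> hrefl u) x"
    by (simp add: hrefl_def linear_diff[OF l] linear_cmul[OF l])
qed

lemma det_hrefl:
  fixes u :: "real^'n"
  assumes "norm u = 1" shows "det (matrix (hrefl u)) = -1"
proof -
  obtain k :: 'n where True by simp
  obtain Q :: "real^'n \<Rightarrow> real^'n" where Q: "orthogonal_transformation Q" "Q (axis k 1) = u"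
    using orthogonal_transformation_exists[of "axis k (1::real)" u] assms by auto
  have lQ: "linear Q" using Q orthogonal_transformation by blast
  have "matrix (hrefl u \<circ> Q) = matrix (Q \<circ> hrefl (axis k 1))"
    using hrefl_conj[OF Q(1), of "axis k 1"] Q(2) by simp
  then have "matrix (hrefl u) ** matrix Q = matrix Q ** matrix (hrefl (axis k 1))"
    by (simp add: matrix_compose lQ linear_hrefl)
  then have "det (matrix (hrefl u)) * det (matrix Q) = det (matrix Q) * (-1)"
    by (metis det_mul det_hrefl_axis)
  moreover have "det (matrix Q) \<noteq> 0" using orthogonal_transformation_det[OF Q(1)] by auto
  ultimately show ?thesis
    by (metis mult_cancel_right mult_minus1 mult.commute)
qed

lemma hrefl_orth: "x \<bullet> u = 0 \<Longrightarrow> hrefl u x = x"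
  by (simp add: hrefl_def)

lemma hrefl_swap:
  fixes x y :: "real^'n"
  assumes "norm x = norm y" "x \<noteq> y"
  shows "hrefl ((x - y) /\<^sub>R norm (x - y)) x = y"
proof -
  define e where "e = x - y"
  have xy: "x \<bullet> x = y \<bullet> y" using assms(1) by (simp add: dot_square_norm)
  have ee: "e \<bullet> e = 2 * (x \<bullet> e)"
    unfolding e_def using xy by (simp add: inner_diff_left inner_diff_right inner_commute)
  have ne: "norm e \<noteq> 0" using assms(2) e_def by simp
  have n2: "norm e ^ 2 = e \<bullet> e" by (simp add: dot_square_norm)
  have ee0: "e \<bullet> e \<noteq> 0" using ne by simp
  have c1: "2 * (x \<bullet> e) / (norm e)^2 = 1" using ee n2 ee0 by (metis divide_self)
  have "hrefl (e /\<^sub>R norm e) x = x - (2 * (x \<bullet> e) / (norm e)^2) *\<^sub>R e"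
    using ne by (simp add: hrefl_def power2_eq_square field_simps)
  also have "\<dots> = x - e" by (simp only: c1 scaleR_one)
  finally show ?thesis by (simp add: e_def)
qed

lemma exists_orth_map:
  fixes x y :: "real^'n"
  assumes "norm x = norm y"
  shows "\<exists>Q. orthogonal_transformation Q \<and> Q x = y \<and> (\<forall>z. z \<bullet> x = 0 \<and> z \<bullet> y = 0 \<longrightarrow> Q z = z)"
proof (cases "x = y")
  case True
  then show ?thesis by (intro exI[of _ id]) (auto simp: orthogonal_transformation_id[unfolded id_def] id_def)
next
  case False
  define d where "d = (x - y) /\<^sub>R norm (x - y)"
  have "norm d = 1" using False by (simp add: d_def)
  moreover have "hrefl d x = y" using hrefl_swap[OF assms False] by (simp add: d_def)
  moreover have "hrefl d z = z" if "z \<bullet> x = 0 \<and> z \<bullet> y = 0" for z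
    using that by (intro hrefl_orth) (simp add: d_def inner_diff_right)
  ultimately show ?thesis using orth_hrefl by blast
qed

lemma hrefl_coords:
  fixes u1 u2 :: "real^'n"
  assumes "norm u1 = 1" "norm u2 = 1" "u1 \<bullet> u2 = 0"
  shows "hrefl (co *\<^sub>R u1 + si *\<^sub>R u2) (y1 *\<^sub>R u1 + y2 *\<^sub>R u2) =
         (y1 - 2*(co*y1+si*y2)* co) *\<^sub>R u1 + (y2 - 2*(co*y1+si*y2)* si) *\<^sub>R u2"
proof -
  have a: "u1 \<bullet> u1 = 1" "u2 \<bullet> u2 = 1" "u2 \<bullet> u1 = 0"
    using assms by (auto simp: dot_square_norm inner_commute)
  have "(y1 *\<^sub>R u1 + y2 *\<^sub>R u2) \<bullet> (co *\<^sub>R u1 + si *\<^sub>R u2) = co*y1+si*y2"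
    using a assms(3) by (simp add: inner_add_left inner_add_right)
  then show ?thesis
    by (simp add: hrefl_def algebra_simps)
qed

lemma coeff_eq2: "a = a' \<Longrightarrow> b = b' \<Longrightarrow> a *\<^sub>R u1 + b *\<^sub>R u2 = a' *\<^sub>R u1 + b' *\<^sub>R u2"
  by simp

lemma rot_coords:
  fixes u1 u2 :: "real^'n"
  assumes "norm u1 = 1" "norm u2 = 1" "u1 \<bullet> u2 = 0"
  shows "hrefl (co *\<^sub>R u1 + si *\<^sub>R u2) (hrefl u1 (x1 *\<^sub>R u1 + x2 *\<^sub>R u2)) =
         ((2* co^2-1)*x1 - 2* co* si*x2) *\<^sub>R u1 + (2* co* si*x1 + (1-2* si^2)*x2) *\<^sub>R u2"
proof -
  have h1: "hrefl u1 (x1 *\<^sub>R u1 + x2 *\<^sub>R u2) = (-x1) *\<^sub>R u1 + x2 *\<^sub>R u2"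
    using hrefl_coords[OF assms, of 1 0 x1 x2] by simp
  show ?thesis
    unfolding h1 hrefl_coords[OF assms]
    by (rule coeff_eq2) (simp_all add: power2_eq_square algebra_simps)
qed

lemma in_span_cross:
  fixes u1 u2 :: "real^'n"
  assumes "X = x1 *\<^sub>R u1 + x2 *\<^sub>R u2" "V = p *\<^sub>R u1 + q *\<^sub>R u2"
    "p \<noteq> 0 \<or> q \<noteq> 0" "p * x2 - q * x1 = 0"
  shows "X \<in> span {V}"
proof -
  define k where "k = (p*x1 + q*x2) / (p^2 + q^2)"
  have pq: "p^2 + q^2 \<noteq> 0" using assms(3) by (simp add: sum_power2_eq_zero_iff)
  have "x1 = k * p" "x2 = k * q"
    using pq assms(4) by (auto simp: k_def field_simps power2_eq_square) (algebra+)?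
  then have "X = k *\<^sub>R V" using assms(1,2) by (simp add: algebra_simps)
  then show ?thesis by (simp add: span_base span_mul)
qed

lemma core2d:
  fixes p1 q1 p2 q2 p3 q3 A1 A2 B1 B2 :: real
  assumes "p1*q2 - q1*p2 \<noteq> 0 \<or> p1*q3 - q1*p3 \<noteq> 0"
  shows "\<exists>co si l. co^2 + si^2 = 1 \<and>
    p2*(l*q1 + (2*co* si*A1 + (1-2* si^2)*A2)) - q2*(l*p1 + ((2*co^2-1)*A1 - 2*co* si*A2)) = 0 \<and>
    p3*(l*q1 + (2*co* si*B1 + (1-2* si^2)*B2)) - q3*(l*p1 + ((2*co^2-1)*B1 - 2*co* si*B2)) = 0"
proof -
  define d12 where "d12 = p1*q2 - q1*p2"
  define d13 where "d13 = p1*q3 - q1*p3"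
  define e2 where "e2 = (\<lambda>co si::real. p2*(2*co* si*A1 + (1-2* si^2)*A2) - q2*((2*co^2-1)*A1 - 2*co* si*A2))"
  define e3 where "e3 = (\<lambda>co si::real. p3*(2*co* si*B1 + (1-2* si^2)*B2) - q3*((2*co^2-1)*B1 - 2*co* si*B2))"
  define F where "F = (\<lambda>t. e3 (cos t) (sin t) * d12 - e2 (cos t) (sin t) * d13)"
  have Fpi: "F (pi/2) = - F 0" by (simp add: F_def e2_def e3_def algebra_simps)
  have cont: "continuous_on {0..pi/2} F" unfolding F_def e2_def e3_def
    by (intro continuous_intros)
  have "\<exists>t. F t = 0"
  proof (cases "F 0 \<le> 0")
    case True
    then have "F 0 \<le> 0" "0 \<le> F (pi/2)" using Fpi by auto
    then show ?thesis using IVT'[of F 0 0 "pi/2"] cont by auto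
  next
    case False
    then have "F (pi/2) \<le> 0" "0 \<le> F 0" using Fpi by auto
    then show ?thesis using IVT2'[of F "pi/2" 0 0] cont by auto
  qed
  then obtain t where Ft: "F t = 0" by blast
  define co where "co = cos t"
  define si where "si = sin t"
  have D: "e3 co si * d12 = e2 co si * d13" using Ft by (simp add: F_def co_def si_def)
  define l where "l = (if d12 \<noteq> 0 then e2 co si / d12 else e3 co si / d13)"
  have eq2: "p2*(l*q1 + (2*co* si*A1 + (1-2* si^2)*A2)) - q2*(l*p1 + ((2*co^2-1)*A1 - 2*co* si*A2)) = e2 co si - l * d12"
    by (simp add: e2_def d12_def algebra_simps)
  have eq3: "p3*(l*q1 + (2*co* si*B1 + (1-2* si^2)*B2)) - q3*(l*p1 + ((2*co^2-1)*B1 - 2*co* si*B2)) = e3 co si - l * d13"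
    by (simp add: e3_def d13_def algebra_simps)
  have "e2 co si - l * d12 = 0 \<and> e3 co si - l * d13 = 0"
  proof (cases "d12 \<noteq> 0")
    case True
    then show ?thesis using D by (simp add: l_def field_simps)
  next
    case False
    then have "d13 \<noteq> 0" using assms by (simp add: d12_def d13_def)
    then show ?thesis using D False by (simp add: l_def field_simps)
  qed
  moreover have "co^2 + si^2 = 1" by (simp add: co_def si_def)
  ultimately show ?thesis using eq2 eq3 by metis
qed

lemma hrefl_u2:
  fixes u1 u2 :: "real^'n"
  assumes "norm u1 = 1" "norm u2 = 1" "u1 \<bullet> u2 = 0"
  shows "hrefl u2 (y1 *\<^sub>R u1 + y2 *\<^sub>R u2) = y1 *\<^sub>R u1 + (-y2) *\<^sub>R u2"
  using hrefl_coords[OF assms, of 0 1 y1 y2] by simp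

lemma exists_Q:
  fixes w2 w3 u1 u2 :: "real^'n"
  assumes u: "norm u1 = 1" "norm u2 = 1" "u1 \<bullet> u2 = 0"
  shows "\<exists>Q. orthogonal_transformation Q \<and> det (matrix Q) = 1 \<and>
     (\<exists>A1 A2. Q w2 = A1 *\<^sub>R u1 + A2 *\<^sub>R u2) \<and> (\<exists>B1 B2. Q w3 = B1 *\<^sub>R u1 + B2 *\<^sub>R u2)"
proof -
  obtain Q1 where Q1: "orthogonal_transformation Q1" "Q1 w2 = norm w2 *\<^sub>R u1"
    using exists_orth_map[of w2 "norm w2 *\<^sub>R u1"] u by auto
  define y where "y = Q1 w3"
  define yp where "yp = y - (y \<bullet> u1) *\<^sub>R u1"
  obtain Q2 where Q2: "orthogonal_transformation Q2" "Q2 yp = norm yp *\<^sub>R u2"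
     "\<And>z. z \<bullet> yp = 0 \<and> z \<bullet> (norm yp *\<^sub>R u2) = 0 \<Longrightarrow> Q2 z = z"
    using exists_orth_map[of yp "norm yp *\<^sub>R u2"] u by auto
  have uu: "u1 \<bullet> u1 = 1" using u by (simp add: dot_square_norm)
  have Q2u1: "Q2 u1 = u1"
    using u uu by (intro Q2(3)) (simp add: yp_def inner_diff_right inner_commute)
  have l1: "linear Q1" "linear Q2" using Q1 Q2 orthogonal_transformation by blast+
  define Q0 where "Q0 = Q2 \<circ> Q1"
  have oQ0: "orthogonal_transformation Q0" unfolding Q0_def
    using Q1(1) Q2(1) orthogonal_transformation_compose by blast
  have lQ0: "linear Q0" using oQ0 orthogonal_transformation by blast
  have A: "Q0 w2 = norm w2 *\<^sub>R u1 + 0 *\<^sub>R u2"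
    using Q1(2) Q2u1 by (simp add: Q0_def linear_cmul[OF l1(2)])
  have "y = yp + (y \<bullet> u1) *\<^sub>R u1" by (simp add: yp_def)
  then have B: "Q0 w3 = (y \<bullet> u1) *\<^sub>R u1 + norm yp *\<^sub>R u2"
    using Q2(2) Q2u1 by (metis Q0_def comp_apply linear_add[OF l1(2)] linear_cmul[OF l1(2)] y_def add.commute)
  have "\<bar>det (matrix Q0)\<bar> = 1" using oQ0 by simp
  then consider "det (matrix Q0) = 1" | "det (matrix Q0) = -1" by linarith
  then show ?thesis
  proof cases
    case 1
    then show ?thesis using oQ0 A B by blast
  next
    case 2
    define Q where "Q = hrefl u2 \<circ> Q0"
    have "orthogonal_transformation Q" unfolding Q_def
      using orth_hrefl[OF u(2)] oQ0 orthogonal_transformation_compose by blast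
    moreover have "det (matrix Q) = 1" unfolding Q_def
      using 2 det_hrefl[OF u(2)] by (simp add: matrix_compose lQ0 linear_hrefl det_mul)
    moreover have "Q w2 = norm w2 *\<^sub>R u1 + (-0) *\<^sub>R u2"
      unfolding Q_def using A hrefl_u2[OF u, of "norm w2" 0] by (simp del: scaleR_zero_left)
    moreover have "Q w3 = (y \<bullet> u1) *\<^sub>R u1 + (-norm yp) *\<^sub>R u2"
      unfolding Q_def using B hrefl_u2[OF u] by simp
    ultimately show ?thesis by blast
  qed
qed

lemma sumset_span:
  fixes v1 v2 v3 :: "'a::real_vector"
  shows "{x + y + z | x y z. x \<in> span {v1} \<and> y \<in> span {v2} \<and> z \<in> span {v3}} = span {v1, v2, v3}"
proof
  show "{x + y + z | x y z. x \<in> span {v1} \<and> y \<in> span {v2} \<and> z \<in> span {v3}} \<subseteq> span {v1, v2, v3}"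
  proof clarify
    fix x y z assume "x \<in> span {v1}" "y \<in> span {v2}" "z \<in> span {v3}"
    then have "x \<in> span {v1, v2, v3}" "y \<in> span {v1, v2, v3}" "z \<in> span {v1, v2, v3}"
      by (meson insertI1 insert_subset span_mono subset_insertI subsetD)+
    then show "x + y + z \<in> span {v1, v2, v3}" by (intro span_add)
  qed
  show "span {v1, v2, v3} \<subseteq> {x + y + z | x y z. x \<in> span {v1} \<and> y \<in> span {v2} \<and> z \<in> span {v3}}"
  proof
    fix w assume "w \<in> span {v1, v2, v3}"
    then obtain k1 where "w - k1 *\<^sub>R v1 \<in> span {v2, v3}" by (auto simp: span_insert)
    then obtain k2 where "w - k1 *\<^sub>R v1 - k2 *\<^sub>R v2 \<in> span {v3}" by (auto simp: span_insert)
    moreover have "k1 *\<^sub>R v1 \<in> span {v1}" "k2 *\<^sub>R v2 \<in> span {v2}"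
      by (auto intro: span_mul span_base)
    moreover have "w = k1 *\<^sub>R v1 + k2 *\<^sub>R v2 + (w - k1 *\<^sub>R v1 - k2 *\<^sub>R v2)" by simp
    ultimately show "w \<in> {x + y + z | x y z. x \<in> span {v1} \<and> y \<in> span {v2} \<and> z \<in> span {v3}}"
      by blast
  qed
qed

lemma coords2:
  fixes x :: "'a::real_vector"
  assumes "x \<in> span {u1, u2}"
  shows "\<exists>a b. x = a *\<^sub>R u1 + b *\<^sub>R u2"
proof -
  obtain k1 where "x - k1 *\<^sub>R u1 \<in> span {u2}" using assms by (auto simp: span_insert)
  then obtain k2 where "x - k1 *\<^sub>R u1 = k2 *\<^sub>R u2" by (auto simp: span_singleton)
  then have "x = k1 *\<^sub>R u1 + k2 *\<^sub>R u2" by (simp add: algebra_simps)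
  then show ?thesis by blast
qed

lemma dim_three_le: "dim {v1, v2, v3::'a::euclidean_space} \<le> 3"
proof -
  have "card {v1, v2, v3} \<le> 3" by (simp add: card_insert_le_m1)
  then show ?thesis using dim_le_card'[of "{v1,v2,v3}"] by simp
qed

lemma dim_two_le: "dim {v1, v2::'a::euclidean_space} \<le> 2"
proof -
  have "card {v1, v2} \<le> 2" by (simp add: card_insert_le_m1)
  then show ?thesis using dim_le_card'[of "{v1,v2}"] by simp
qed

lemma dim_ge_one: "v1 \<noteq> 0 \<Longrightarrow> 1 \<le> dim {v1, v2, v3::'a::euclidean_space}"
  using independent_card_le_dim[of "{v1}" "{v1,v2,v3}"] by auto

lemma rigid_diff:
  fixes g :: "real^'n \<Rightarrow> real^'n"
  assumes "rigid_motion g"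
  shows "\<exists>f. orthogonal_transformation f \<and> (\<forall>x y. g x - g y = f (x - y)) \<and> (\<forall>x. g x = f x + g 0)"
proof -
  obtain R T where R: "orthogonal_matrix (R::real^'n^'n)" "\<forall>x. g x = R *v x + T"
    using assms unfolding rigid_motion_def by blast
  have "orthogonal_transformation (\<lambda>x. R *v x)"
    using R(1) by (simp add: orthogonal_transformation_matrix matrix_vector_mul_linear)
  moreover have "\<forall>x y. g x - g y = R *v (x - y)"
    using R(2) by (simp add: matrix_vector_mult_diff_distrib)
  moreover have "\<forall>x. g x = R *v x + g 0" using R(2) by simp
  ultimately show ?thesis by blast
qed

lemma two_indices:
  assumes "CARD('n) \<ge> 2"
  obtains i j :: "'n::finite" where "i \<noteq> j"
proof -
  have "\<not> (\<forall>a\<in>(UNIV::'n set). \<forall>b\<in>UNIV. a = b)"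
    using assms card_le_Suc0_iff_eq[of "UNIV::'n set"] by auto
  then show ?thesis using that by blast
qed

lemma necessity:
  fixes v1 v2 v3 :: "real^'n"
  assumes n2: "CARD('n) \<ge> 2" and nz: "v1 \<noteq> 0"
    and H: "\<forall>z1 z2 z3 :: real^'n. \<exists>g. rigid_motion g \<and> g z1 \<in> span {v1} \<and> g z2 \<in> span {v2} \<and> g z3 \<in> span {v3}"
  shows "dim {v1, v2, v3} = 2"
proof (rule ccontr)
  assume ne: "dim {v1, v2, v3} \<noteq> 2"
  define S where "S = span {v1, v2, v3}"
  have dS: "dim S = dim {v1, v2, v3}" by (simp add: S_def dim_span)
  have sub: "span {v1} \<subseteq> S" "span {v2} \<subseteq> S" "span {v3} \<subseteq> S"
    unfolding S_def by (intro span_mono; auto)+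
  obtain i j :: 'n where ij: "i \<noteq> j" using two_indices[OF n2] by blast
  define a where "a = axis i (1::real)"
  define b where "b = axis j (1::real)"
  have "dim {v1, v2, v3} = 1 \<or> dim {v1, v2, v3} = 3"
    using ne dim_three_le[of v1 v2 v3] dim_ge_one[OF nz, of v2 v3] by linarith
  then show False
  proof
    assume d1: "dim {v1, v2, v3} = 1"
    obtain g where g: "rigid_motion g" "g 0 \<in> span {v1}" "g a \<in> span {v2}" "g b \<in> span {v3}"
      using H by blast
    obtain f where f: "orthogonal_transformation f" "\<forall>x y. g x - g y = f (x - y)"
      using rigid_diff[OF g(1)] by blast
    have fa: "f a \<in> S" using f(2)[rule_format, of a 0] g sub by (metis diff_zero span_diff span_span S_def subsetD)
    have fb: "f b \<in> S" using f(2)[rule_format, of b 0] g sub by (metis diff_zero span_diff span_span S_def subsetD)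
    have "f a \<bullet> f b = a \<bullet> b" using f(1) by (simp add: orthogonal_transformation_def)
    then have orth: "f a \<bullet> f b = 0" using ij by (simp add: a_def b_def inner_axis_axis)
    have na: "norm (f a) = 1" "norm (f b) = 1" using f(1) by (simp_all add: orthogonal_transformation_norm a_def b_def)
    then have "f a \<noteq> f b" using orth by (metis inner_eq_zero_iff norm_eq_zero zero_neq_one)
    have "independent {f a, f b}"
      using orth na by (intro pairwise_orthogonal_independent) (auto simp: pairwise_def orthogonal_def inner_commute)
    then have "card {f a, f b} \<le> dim S" using fa fb by (intro independent_card_le_dim) auto
    then show False using \<open>f a \<noteq> f b\<close> dS d1 by simp
  next
    assume d3: "dim {v1, v2, v3} = 3"
    obtain g where g: "rigid_motion g" "g 0 \<in> span {v1}" "g a \<in> span {v2}" "g (2 *\<^sub>R a) \<in> span {v3}"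
      using H by blast
    obtain f where f: "orthogonal_transformation f" "\<forall>x. g x = f x + g 0"
      using rigid_diff[OF g(1)] by blast
    have lf: "linear f" using f(1) orthogonal_transformation by blast
    have nfa: "f a \<noteq> 0" using f(1) by (metis orthogonal_transformation_norm norm_axis_1 a_def norm_zero zero_neq_one)
    obtain c1 where c1: "g 0 = c1 *\<^sub>R v1" using g(2) by (auto simp: span_singleton)
    have ga: "g a = f a + g 0" using f(2) by blast
    have g2a: "g (2 *\<^sub>R a) = 2 *\<^sub>R f a + g 0" using f(2) linear_cmul[OF lf] by metis
    obtain c2 where "g a = c2 *\<^sub>R v2" using g(3) by (auto simp: span_singleton)
    then have c2: "f a + g 0 = c2 *\<^sub>R v2" using ga by simp
    obtain c3 where "g (2 *\<^sub>R a) = c3 *\<^sub>R v3" using g(4) by (auto simp: span_singleton)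
    then have c3: "2 *\<^sub>R f a + g 0 = c3 *\<^sub>R v3" using g2a by simp
    have rel: "c1 *\<^sub>R v1 + c3 *\<^sub>R v3 = (2 * c2) *\<^sub>R v2"
      using c1 c2 c3 by (metis (no_types, lifting) add.assoc add.commute scaleR_2 scaleR_scaleR)
    have "dim {v1, v2, v3} \<le> 2"
    proof (cases "c1 \<noteq> 0")
      case True
      have "c1 *\<^sub>R v1 = (2 * c2) *\<^sub>R v2 - c3 *\<^sub>R v3" using rel by (simp add: eq_diff_eq)
      then have "(1/c1) *\<^sub>R (c1 *\<^sub>R v1) = (1/c1) *\<^sub>R ((2 * c2) *\<^sub>R v2 - c3 *\<^sub>R v3)" by simp
      then have e: "v1 = (1/c1) *\<^sub>R ((2 * c2) *\<^sub>R v2 - c3 *\<^sub>R v3)" using True by simp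
      have "(1/c1) *\<^sub>R ((2 * c2) *\<^sub>R v2 - c3 *\<^sub>R v3) \<in> span {v2, v3}"
        by (intro span_mul span_diff span_base) auto
      then have "v1 \<in> span {v2, v3}" using e by simp
      then have "span {v1, v2, v3} = span {v2, v3}" by (simp add: span_redundant)
      then show ?thesis using dim_two_le[of v2 v3] by (metis dim_span)
    next
      case False
      show ?thesis
      proof (cases "c3 \<noteq> 0")
        case True
        have "c3 *\<^sub>R v3 = (2 * c2) *\<^sub>R v2 - c1 *\<^sub>R v1" using rel by (simp add: eq_diff_eq add.commute)
        then have "(1/c3) *\<^sub>R (c3 *\<^sub>R v3) = (1/c3) *\<^sub>R ((2 * c2) *\<^sub>R v2 - c1 *\<^sub>R v1)" by simp
        then have e: "v3 = (1/c3) *\<^sub>R ((2 * c2) *\<^sub>R v2 - c1 *\<^sub>R v1)" using True by simp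
        have "(1/c3) *\<^sub>R ((2 * c2) *\<^sub>R v2 - c1 *\<^sub>R v1) \<in> span {v1, v2}"
          by (intro span_mul span_diff span_base) auto
        then have "v3 \<in> span {v1, v2}" using e by simp
        then have "span {v3, v1, v2} = span {v1, v2}" by (simp add: span_redundant)
        moreover have "{v3, v1, v2} = {v1, v2, v3}" by auto
        ultimately show ?thesis using dim_two_le[of v1 v2] by (metis dim_span)
      next
        case False
        then have "g 0 = 0" "2 *\<^sub>R f a + g 0 = 0" using c1 c3 \<open>\<not> c1 \<noteq> 0\<close> by auto
        then have "f a = 0" by simp
        then show ?thesis using nfa by simp
      qed
    qed
    then show False using d3 by simp
  qed
qed

lemma sufficiency:
  fixes v1 v2 v3 :: "real^'n"
  assumes nz: "v1 \<noteq> 0" "v2 \<noteq> 0" "v3 \<noteq> 0" and d2: "dim {v1, v2, v3} = 2"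
  shows "\<exists>g. rigid_motion g \<and> g z1 \<in> span {v1} \<and> g z2 \<in> span {v2} \<and> g z3 \<in> span {v3}"
proof -
  define S where "S = span {v1, v2, v3}"
  have sS: "subspace S" by (simp add: S_def)
  have dS: "dim S = 2" using d2 by (simp add: S_def dim_span)
  obtain B where B: "B \<subseteq> S" "pairwise orthogonal B" "\<And>x. x \<in> B \<Longrightarrow> norm x = 1"
      "independent B" "card B = dim S" "span B = S"
    using orthonormal_basis_subspace[OF sS] by blast
  obtain u1 u2 where u12: "B = {u1, u2}" "u1 \<noteq> u2" using B(5) dS card_2_iff by metis
  have u: "norm u1 = 1" "norm u2 = 1" "u1 \<bullet> u2 = 0"
    using B(2,3) u12 by (auto simp: pairwise_def orthogonal_def)
  have inS: "v1 \<in> span {u1, u2}" "v2 \<in> span {u1, u2}" "v3 \<in> span {u1, u2}"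
    using B(6) u12 by (auto simp: S_def intro: span_base)
  obtain p1 q1 where v1: "v1 = p1 *\<^sub>R u1 + q1 *\<^sub>R u2" using coords2[OF inS(1)] by blast
  obtain p2 q2 where v2: "v2 = p2 *\<^sub>R u1 + q2 *\<^sub>R u2" using coords2[OF inS(2)] by blast
  obtain p3 q3 where v3: "v3 = p3 *\<^sub>R u1 + q3 *\<^sub>R u2" using coords2[OF inS(3)] by blast
  have pq: "p1 \<noteq> 0 \<or> q1 \<noteq> 0" "p2 \<noteq> 0 \<or> q2 \<noteq> 0" "p3 \<noteq> 0 \<or> q3 \<noteq> 0"
    using nz v1 v2 v3 by auto
  have dd: "p1*q2 - q1*p2 \<noteq> 0 \<or> p1*q3 - q1*p3 \<noteq> 0"
  proof (rule ccontr)
    assume "\<not> ?thesis"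
    then have "v2 \<in> span {v1}" "v3 \<in> span {v1}"
      using in_span_cross[OF v2 v1 pq(1)] in_span_cross[OF v3 v1 pq(1)] by auto
    then have "{v1, v2, v3} \<subseteq> span {v1}" by (auto intro: span_base)
    then have "dim {v1, v2, v3} \<le> dim {v1}" using dim_subset dim_span by metis
    also have "\<dots> \<le> 1" using dim_le_card'[of "{v1}"] by simp
    finally show False using d2 by simp
  qed
  obtain Q A1 A2 B1 B2 where Q: "orthogonal_transformation Q" "det (matrix Q) = 1"
     "Q (z2 - z1) = A1 *\<^sub>R u1 + A2 *\<^sub>R u2" "Q (z3 - z1) = B1 *\<^sub>R u1 + B2 *\<^sub>R u2"
    using exists_Q[OF u, of "z2 - z1" "z3 - z1"] by blast
  obtain co si l where cs: "co^2 + si^2 = 1"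
    "p2*(l*q1 + (2*co* si*A1 + (1-2* si^2)*A2)) - q2*(l*p1 + ((2*co^2-1)*A1 - 2*co* si*A2)) = 0"
    "p3*(l*q1 + (2*co* si*B1 + (1-2* si^2)*B2)) - q3*(l*p1 + ((2*co^2-1)*B1 - 2*co* si*B2)) = 0"
    using core2d[OF dd, of A1 A2 B1 B2] by blast
  define b where "b = co *\<^sub>R u1 + si *\<^sub>R u2"
  have uu: "u1 \<bullet> u1 = 1" "u2 \<bullet> u2 = 1" "u2 \<bullet> u1 = 0"
    using u by (auto simp: dot_square_norm inner_commute)
  have "b \<bullet> b = co^2 + si^2"
    using uu u(3) by (simp add: b_def inner_add_left inner_add_right power2_eq_square)
  then have nb: "norm b = 1" using cs(1) by (simp add: norm_eq_sqrt_inner)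
  define F where "F = hrefl b \<circ> hrefl u1 \<circ> Q"
  have oF: "orthogonal_transformation F" unfolding F_def
    using orth_hrefl[OF nb] orth_hrefl[OF u(1)] Q(1) orthogonal_transformation_compose by blast
  have lF: "linear F" using oF orthogonal_transformation by blast
  have lQ: "linear Q" using Q(1) orthogonal_transformation by blast
  define R where "R = matrix F"
  have oR: "orthogonal_matrix R" using oF by (simp add: R_def orthogonal_transformation_matrix)
  have dR: "det R = 1" unfolding R_def F_def
    using det_hrefl[OF nb] det_hrefl[OF u(1)] Q(2)
    by (simp add: matrix_compose linear_hrefl lQ linear_compose det_mul)
  have RF: "\<And>x. R *v x = F x" using lF by (simp add: R_def matrix_works)
  define T where "T = l *\<^sub>R v1 - R *v z1"
  define g where "g = (\<lambda>x. R *v x + T)"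
  have rg: "rigid_motion g" unfolding rigid_motion_def g_def using oR dR by blast
  have gz: "\<And>z. g z = F (z - z1) + l *\<^sub>R v1"
    by (simp add: g_def T_def RF linear_diff[OF lF])
  have g1: "g z1 \<in> span {v1}" using gz by (simp add: span_mul span_base linear_0[OF lF])
  have "g z2 = (l*p1 + ((2*co^2-1)*A1 - 2*co* si*A2)) *\<^sub>R u1 + (l*q1 + (2*co* si*A1 + (1-2* si^2)*A2)) *\<^sub>R u2"
    unfolding gz F_def comp_apply Q(3) b_def rot_coords[OF u] v1 by (simp add: algebra_simps)
  then have g2: "g z2 \<in> span {v2}" using in_span_cross[OF _ v2 pq(2)] cs(2) by blast
  have "g z3 = (l*p1 + ((2*co^2-1)*B1 - 2*co* si*B2)) *\<^sub>R u1 + (l*q1 + (2*co* si*B1 + (1-2* si^2)*B2)) *\<^sub>R u2"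
    unfolding gz F_def comp_apply Q(4) b_def rot_coords[OF u] v1 by (simp add: algebra_simps)
  then have g3: "g z3 \<in> span {v3}" using in_span_cross[OF _ v3 pq(3)] cs(3) by blast
  show ?thesis using rg g1 g2 g3 by blast
qed


theorem proposition3p4:
  fixes l1 l2 l3 :: "(real^'n) set"
  assumes "CARD('n) \<ge> 2"
    and "line_through_origin l1" and "line_through_origin l2" and "line_through_origin l3"
  shows "dim {x + y + z | x y z. x \<in> l1 \<and> y \<in> l2 \<and> z \<in> l3} = 2 \<longleftrightarrow>
         (\<forall>z1 z2 z3 :: real^'n. \<exists>g. rigid_motion g \<and> g z1 \<in> l1 \<and> g z2 \<in> l2 \<and> g z3 \<in> l3)"
proof -
  obtain v1 where v1: "v1 \<noteq> 0" "l1 = span {v1}" using assms(2) line_through_origin_def by blast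
  obtain v2 where v2: "v2 \<noteq> 0" "l2 = span {v2}" using assms(3) line_through_origin_def by blast
  obtain v3 where v3: "v3 \<noteq> 0" "l3 = span {v3}" using assms(4) line_through_origin_def by blast
  have "dim {x + y + z | x y z. x \<in> l1 \<and> y \<in> l2 \<and> z \<in> l3} = dim {v1, v2, v3}"
    using sumset_span[of v1 v2 v3] v1 v2 v3 by (simp add: dim_span)
  then show ?thesis
    using necessity[OF assms(1) v1(1), of v2 v3] sufficiency[OF v1(1) v2(1) v3(1)] v1(2) v2(2) v3(2)
    by auto
qed

end
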